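(* Let $A$ be a circular $m\times n$ matrix and $b\in\mathbb{Z}_+^m$. Then $$Q^*(A,b)=\operatorname{conv}\Big(\bigcup_{\beta\in\mathbb{Z}_{\ge0}}Q_\beta(A,b)\Big),$$ where $Q_\beta(A,b)=\{x\in\mathbb{R}^n:Ax\ge b,\ x\ge0,\ \mathbf{1}^Tx=\beta\}$.
   Context: Notation: $[n]=\{1,\dots,n\}$ with addition mod $n$; for $a,c\in[n]$ with $t\ge0$ minimal such that $a+t\equiv c\pmod n$, $[a,c)_n=\{a,\dots,a+t-1\}$ (mod $n$). An $m\times n$ $\{0,1\}$-matrix $A$ is circular if for each row $i$ there are $\ell_i\in[n]$ and an integer $2\le k_i\le n-1$ such that row $i$ is the incidence vector of $[\ell_i,\ell_i+k_i)_n$. $Q(A,b)=\{x\in\mathbb{R}^n:Ax\ge b,x\ge0\}$, $Q^*(A,b)=\operatorname{conv}(Q(A,b)\cap\mathbb{Z}^n)$. *)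

theory Defs
  imports "HOL-Analysis.Analysis"
begin

text \<open>Columns of an m x n matrix are indexed by a finite type 'n; the cyclic
  order of the columns [n] is fixed by a bijection ord from 'n onto {0..<CARD('n)}
  (position of each column, 0-based).\<close>

definition cyc_interval :: "nat \<Rightarrow> nat \<Rightarrow> nat \<Rightarrow> nat set" where
  "cyc_interval n l k = {(l + t) mod n | t. t < k}"

definition circular :: "('n::finite \<Rightarrow> nat) \<Rightarrow> real^'n^'m \<Rightarrow> bool" where
  "circular ord A \<longleftrightarrow>
     (\<forall>i. \<exists>l k. l < CARD('n) \<and> 2 \<le> k \<and> k \<le> CARD('n) - 1 \<and>
        (\<forall>j. A $ i $ j = (if ord j \<in> cyc_interval CARD('n) l k then 1 else 0)))"

definition Qpoly :: "real^'n^'m \<Rightarrow> real^'m \<Rightarrow> (real^'n) set" where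
  "Qpoly A b = {x. (\<forall>i. (A *v x) $ i \<ge> b $ i) \<and> (\<forall>j. x $ j \<ge> 0)}"

definition Qint_hull :: "real^'n^'m \<Rightarrow> real^'m \<Rightarrow> (real^'n) set" where
  "Qint_hull A b = convex hull (Qpoly A b \<inter> {x. \<forall>j. x $ j \<in> \<int>})"

definition Qbeta :: "real \<Rightarrow> real^'n^'m \<Rightarrow> real^'m \<Rightarrow> (real^'n) set" where
  "Qbeta \<beta> A b = {x. (\<forall>i. (A *v x) $ i \<ge> b $ i) \<and> (\<forall>j. x $ j \<ge> 0) \<and>
                       (\<Sum>j\<in>UNIV. x $ j) = \<beta>}"

end

theory Submission
  imports Defs
begin

definition pre :: "('n::finite \<Rightarrow> nat) \<Rightarrow> real^'n \<Rightarrow> nat \<Rightarrow> real" where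
  "pre ord x p = (\<Sum>j\<in>{j. ord j < p}. x $ j)"

definition phi :: "(real \<Rightarrow> real) \<Rightarrow> real \<Rightarrow> real" where
  "phi h s = of_int \<lfloor>s\<rfloor> + h (frac s)"

definition adm :: "(real \<Rightarrow> real) \<Rightarrow> bool" where
  "adm h \<longleftrightarrow> h 0 = 0 \<and> (\<forall>u v. 0 \<le> u \<longrightarrow> u \<le> v \<longrightarrow> v < 1 \<longrightarrow> h u \<le> h v)
     \<and> (\<forall>u. 0 \<le> u \<longrightarrow> u < 1 \<longrightarrow> 0 \<le> h u \<and> h u \<le> 1)"

lemma phi_shift: "phi h (s + of_int m) = phi h s + of_int m"
  unfolding phi_def frac_add_of_int_right by (simp flip: floor_add_int)

lemma phi_int: "adm h \<Longrightarrow> phi h (of_int m) = of_int m"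
  using phi_shift[of h 0 m] by (simp add: phi_def adm_def)

lemma phi_mono: assumes "adm h" "s \<le> s'" shows "phi h s \<le> phi h s'"
proof (cases "\<lfloor>s\<rfloor> = \<lfloor>s'\<rfloor>")
  case True
  then have "frac s \<le> frac s'" using assms(2) by (simp add: frac_def)
  then show ?thesis using assms(1) True unfolding phi_def adm_def
    by (simp add: frac_lt_1)
next
  case False
  then have "\<lfloor>s\<rfloor> < \<lfloor>s'\<rfloor>" using floor_mono[OF assms(2)] by simp
  then have "real_of_int \<lfloor>s\<rfloor> + 1 \<le> of_int \<lfloor>s'\<rfloor>" by linarith
  moreover have "h (frac s) \<le> 1" "0 \<le> h (frac s')" using assms(1) unfolding adm_def
    by (auto simp: frac_lt_1)
  ultimately show ?thesis unfolding phi_def by linarith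
qed

lemma phi_mono_shift: assumes "adm h" "s' + of_int m \<le> s" shows "phi h s' + of_int m \<le> phi h s"
  using phi_mono[OF assms] phi_shift by simp

lemma frac_phi: assumes "adm h"
  shows "frac (phi h s) = (if h (frac s) = 1 then 0 else h (frac s))"
proof -
  have r: "0 \<le> h (frac s)" "h (frac s) \<le> 1" using assms unfolding adm_def by (auto simp: frac_lt_1)
  show ?thesis
  proof (cases "h (frac s) = 1")
    case True
    then have "phi h s = of_int (\<lfloor>s\<rfloor> + 1)" unfolding phi_def by simp
    then show ?thesis using True by (simp only: frac_of_int) simp
  next
    case False
    then have "h (frac s) < 1" using r by simp
    then have "\<lfloor>phi h s\<rfloor> = \<lfloor>s\<rfloor>" unfolding phi_def using r
      by (intro floor_unique) auto
    then show ?thesis using False by (simp only: frac_def[of "phi h s"]) (simp add: phi_def)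
  qed
qed


lemma pre_0[simp]: "pre ord x 0 = 0" by (simp add: pre_def)

lemma pre_Suc: assumes "inj ord" "ord j = p"
  shows "pre ord x (Suc p) = pre ord x p + x $ j"
proof -
  have "{j'. ord j' < Suc p} = insert j {j'. ord j' < p}"
    using assms by (auto simp: less_Suc_eq inj_eq)
  then show ?thesis unfolding pre_def using assms(2) by simp
qed

lemma pre_n: assumes "bij_betw ord UNIV {0..<CARD('n)}"
  shows "pre ord (x::real^'n::finite) CARD('n) = (\<Sum>j\<in>UNIV. x $ j)"
proof -
  have "{j. ord j < CARD('n)} = UNIV" using assms by (auto simp: bij_betw_def)
  then show ?thesis by (simp add: pre_def)
qed

lemma comp_pre: assumes "inj ord"
  shows "x $ j = pre ord x (Suc (ord j)) - pre ord x (ord j)"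
  using pre_Suc[OF assms refl] by simp

definition rnd :: "('n::finite \<Rightarrow> nat) \<Rightarrow> (real \<Rightarrow> real) \<Rightarrow> real^'n \<Rightarrow> real^'n" where
  "rnd ord h x = (\<chi> j. phi h (pre ord x (Suc (ord j))) - phi h (pre ord x (ord j)))"

lemma pre_rnd: assumes "bij_betw ord UNIV {0..<CARD('n)}" "adm h"
  shows "p \<le> CARD('n) \<Longrightarrow> pre ord (rnd ord h (x::real^'n::finite)) p = phi h (pre ord x p)"
proof (induction p)
  case 0
  then show ?case using phi_int[OF assms(2), of 0] by simp
next
  case (Suc p)
  then have "p \<in> ord ` UNIV" using assms(1) by (auto simp: bij_betw_def)
  then obtain j where j: "ord j = p" by auto
  have inj: "inj ord" using assms(1) by (simp add: bij_betw_def)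
  show ?case using Suc pre_Suc[OF inj j] j by (simp add: rnd_def)
qed

definition rv :: "nat \<Rightarrow> nat \<Rightarrow> nat \<Rightarrow> (nat \<Rightarrow> real) \<Rightarrow> real" where
  "rv n l k F = (if l + k \<le> n then F (l + k) - F l else F n - F l + F (l + k - n))"

lemma cyc_iff: assumes "q < n" "l < n" "k \<le> n"
  shows "q \<in> cyc_interval n l k \<longleftrightarrow> (if l \<le> q then q < l + k else q + n < l + k)"
proof
  assume "q \<in> cyc_interval n l k"
  then obtain t where t: "t < k" "q = (l + t) mod n" by (auto simp: cyc_interval_def)
  show "(if l \<le> q then q < l + k else q + n < l + k)"
  proof (cases "l + t < n")
    case True
    then show ?thesis using t by auto
  next
    case False
    then have "q = l + t - n" using t assms by (simp add: mod_if le_mod_geq)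
    then show ?thesis using t assms False by auto
  qed
next
  assume h: "(if l \<le> q then q < l + k else q + n < l + k)"
  show "q \<in> cyc_interval n l k"
  proof (cases "l \<le> q")
    case True
    then have "q = (l + (q - l)) mod n" "q - l < k" using h assms by auto
    then show ?thesis unfolding cyc_interval_def by blast
  next
    case False
    then have "q = (l + (q + n - l)) mod n" "q + n - l < k" using h assms by auto
    then show ?thesis unfolding cyc_interval_def by blast
  qed
qed

lemma rowsum:
  fixes A :: "real^'n::finite^'m::finite"
  assumes "bij_betw ord UNIV {0..<CARD('n)}" "l < CARD('n)" "k \<le> CARD('n)"
    and "\<forall>j. A $ i $ j = (if ord j \<in> cyc_interval CARD('n) l k then 1 else 0)"
  shows "(A *v x) $ i = rv CARD('n) l k (pre ord x)"
proof -
  let ?n = "CARD('n)"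
  have lt: "ord j < ?n" for j using assms(1) by (auto simp: bij_betw_def)
  have "(A *v x) $ i = (\<Sum>j\<in>UNIV. (if ord j \<in> cyc_interval ?n l k then 1 else 0) * x $ j)"
    using assms(4) by (simp add: matrix_vector_mult_def)
  also have "\<dots> = (\<Sum>j\<in>{j. ord j \<in> cyc_interval ?n l k}. x $ j)"
    using sum.inter_filter[of UNIV "\<lambda>j. x $ j" "\<lambda>j. ord j \<in> cyc_interval ?n l k"]
    by (simp add: if_distrib[of "\<lambda>c. c * _"] cong: if_cong)
  also have "{j. ord j \<in> cyc_interval ?n l k} =
     {j. if l \<le> ord j then ord j < l + k else ord j + ?n < l + k}"
    using cyc_iff[OF lt assms(2,3)] by auto
  finally have e: "(A *v x) $ i = (\<Sum>j\<in>{j. if l \<le> ord j then ord j < l + k else ord j + ?n < l + k}. x $ j)" .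
  show ?thesis
  proof (cases "l + k \<le> ?n")
    case True
    have "{j. if l \<le> ord j then ord j < l + k else ord j + ?n < l + k} =
       {j. ord j < l + k} - {j. ord j < l}" using True by auto
    moreover have "{j. ord j < l} \<subseteq> {j. ord j < l + k}" by auto
    ultimately show ?thesis using e True by (simp add: rv_def pre_def sum_diff)
  next
    case False
    have "{j. if l \<le> ord j then ord j < l + k else ord j + ?n < l + k} =
       (UNIV - {j. ord j < l}) \<union> {j. ord j < l + k - ?n}" using False lt by (auto simp: not_le; meson less_trans)
    moreover have "(UNIV - {j. ord j < l}) \<inter> {j. ord j < l + k - ?n} = {}" using assms(3) by auto
    ultimately have "(A *v x) $ i = (\<Sum>j\<in>UNIV - {j. ord j < l}. x $ j) + pre ord x (l + k - ?n)"
      using e by (simp add: sum.union_disjoint pre_def)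
    then show ?thesis using False pre_n[OF assms(1), of x]
      by (simp add: rv_def pre_def sum_diff)
  qed
qed


lemma rnd_Qbeta:
  fixes A :: "real^'n::finite^'m::finite"
  assumes bij: "bij_betw ord UNIV {0..<CARD('n)}"
    and LK: "\<forall>i. L i < CARD('n) \<and> K i \<le> CARD('n) \<and>
        (\<forall>j. A $ i $ j = (if ord j \<in> cyc_interval CARD('n) (L i) (K i) then 1 else 0))"
    and bint: "\<forall>i. b $ i \<in> \<int>"
    and x: "x \<in> Qbeta (real \<beta>) A b" and h: "adm h"
  shows "rnd ord h x \<in> Qbeta (real \<beta>) A b"
proof -
  let ?n = "CARD('n)"
  let ?y = "rnd ord h x"
  have inj: "inj ord" using bij by (simp add: bij_betw_def)
  have rs: "(A *v z) $ i = rv ?n (L i) (K i) (pre ord z)" for z i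
    using rowsum[OF bij, of "L i" "K i" A i z] LK by auto
  have py: "p \<le> ?n \<Longrightarrow> pre ord ?y p = phi h (pre ord x p)" for p
    using pre_rnd[OF bij h] by blast
  have xn: "pre ord x ?n = real \<beta>" using x pre_n[OF bij] by (simp add: Qbeta_def)
  have beta: "phi h (real \<beta>) = real \<beta>" using phi_int[OF h, of "int \<beta>"] by simp
  have "(\<Sum>j\<in>UNIV. ?y $ j) = real \<beta>"
    using pre_n[OF bij, of ?y] py[of ?n] xn beta by simp
  moreover have "?y $ j \<ge> 0" for j
  proof -
    have "ord j < ?n" using bij by (auto simp: bij_betw_def)
    have "pre ord x (ord j) \<le> pre ord x (Suc (ord j))"
      using pre_Suc[OF inj refl, of x j] x by (simp add: Qbeta_def)
    then show ?thesis using phi_mono[OF h] by (simp add: rnd_def)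
  qed
  moreover have "(A *v ?y) $ i \<ge> b $ i" for i
  proof -
    obtain m where m: "b $ i = of_int m" using bint by (meson Ints_cases)
    have xi: "rv ?n (L i) (K i) (pre ord x) \<ge> b $ i" proof -
      have "b $ i \<le> (A *v x) $ i" using x by (simp add: Qbeta_def)
      then show ?thesis using rs[of x i] by simp
    qed
    show ?thesis
    proof (cases "L i + K i \<le> ?n")
      case True
      then have "pre ord x (L i) + of_int m \<le> pre ord x (L i + K i)" using xi m by (simp add: rv_def)
      from phi_mono_shift[OF h this] have
        "phi h (pre ord x (L i)) + of_int m \<le> phi h (pre ord x (L i + K i))" .
      then show ?thesis using rs[of ?y i] True py[of "L i"] py[of "L i + K i"] LK m
        by (simp add: rv_def)
    next
      case False
      then have "pre ord x (L i) + of_int (m - int \<beta>) \<le> pre ord x (L i + K i - ?n)"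
        using xi m xn by (simp add: rv_def)
      from phi_mono_shift[OF h this] have
        "phi h (pre ord x (L i)) + of_int (m - int \<beta>) \<le> phi h (pre ord x (L i + K i - ?n))" .
      moreover have "L i \<le> ?n" "L i + K i - ?n \<le> ?n" using LK[rule_format, of i] by auto
      ultimately show ?thesis using rs[of ?y i] False py[of "L i"] py[of "L i + K i - ?n"] py[of ?n] LK m xn beta
        by (simp add: rv_def)
    qed
  qed
  ultimately show ?thesis by (simp add: Qbeta_def)
qed


definition Fr :: "('n::finite \<Rightarrow> nat) \<Rightarrow> real^'n \<Rightarrow> real set" where
  "Fr ord x = (\<lambda>p. frac (pre ord x p)) ` {..CARD('n)}"

lemma Qbeta_sub: "Qbeta \<beta> A b \<subseteq> Qpoly A b"
  by (auto simp: Qbeta_def Qpoly_def)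

lemma main_ind:
  fixes A :: "real^'n::finite^'m::finite"
  assumes bij: "bij_betw ord UNIV {0..<CARD('n)}"
    and LK: "\<forall>i. L i < CARD('n) \<and> K i \<le> CARD('n) \<and>
        (\<forall>j. A $ i $ j = (if ord j \<in> cyc_interval CARD('n) (L i) (K i) then 1 else 0))"
    and bint: "\<forall>i. b $ i \<in> \<int>"
  shows "x \<in> Qbeta (real \<beta>) A b \<Longrightarrow> card (Fr ord x - {0}) = N \<Longrightarrow>
     x \<in> convex hull (Qpoly A b \<inter> {x. \<forall>j. x $ j \<in> \<int>})"
proof (induction N arbitrary: x rule: less_induct)
  case (less N x)
  let ?n = "CARD('n)"
  let ?K = "Qpoly A b \<inter> {x. \<forall>j. x $ j \<in> \<int>}"
  have inj: "inj ord" using bij by (simp add: bij_betw_def)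
  have ordlt: "ord j < ?n" for j using bij by (auto simp: bij_betw_def)
  have finF: "finite (Fr ord x)" by (simp add: Fr_def)
  have Frng: "u \<in> Fr ord x \<Longrightarrow> 0 \<le> u \<and> u < 1" for u by (auto simp: Fr_def frac_lt_1)
  have F0: "0 \<in> Fr ord x" unfolding Fr_def by (rule image_eqI[of _ _ 0]) auto
  show ?case
  proof (cases "Fr ord x - {0} = {}")
    case True
    have "pre ord x p \<in> \<int>" if "p \<le> ?n" for p
    proof -
      have "frac (pre ord x p) \<in> Fr ord x" using that by (auto simp: Fr_def)
      then show ?thesis using True by (auto simp: frac_eq_0_iff)
    qed
    then have "x $ j \<in> \<int>" for j
      using comp_pre[OF inj, of x j] ordlt[of j] by (simp add: Ints_diff)
    then have "x \<in> ?K" using less.prems(1) Qbeta_sub by blast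
    then show ?thesis by (simp add: hull_inc)
  next
    case False
    define t where "t = Max (Fr ord x - {0})"
    have tin: "t \<in> Fr ord x - {0}" using False finF unfolding t_def by (intro Max_in) auto
    have tmax: "u \<in> Fr ord x - {0} \<Longrightarrow> u \<le> t" for u using finF by (simp add: t_def)
    define D where "D = Fr ord x - {t}"
    have D0: "0 \<in> D" using F0 tin by (auto simp: D_def)
    define t' where "t' = Max D"
    have t'in: "t' \<in> D" unfolding t'_def using D0 finF by (intro Max_in) (auto simp: D_def)
    have t'max: "u \<in> D \<Longrightarrow> u \<le> t'" for u using finF by (simp add: t'_def D_def)
    have t'0: "0 \<le> t'" using t'max[OF D0] .
    have t1: "t < 1" "0 < t" using Frng tin by force+
    have tt': "t' < t"
    proof (cases "t' = 0")
      case True then show ?thesis using t1 by simp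
    next
      case False then have "t' \<le> t" "t' \<noteq> t" using t'in tmax by (auto simp: D_def)
      then show ?thesis by simp
    qed
    have Fcase: "u \<in> Fr ord x \<Longrightarrow> u \<le> t' \<or> u = t" for u
      using t'max by (auto simp: D_def)
    define h1 where "h1 = (\<lambda>u::real. if t' < u then t' else u)"
    define h2 where "h2 = (\<lambda>u::real. if t' < u then 1 else u)"
    have a1: "adm h1" using t'0 t1 tt' unfolding adm_def h1_def by auto
    have a2: "adm h2" using t'0 t1 tt' unfolding adm_def h2_def by auto
    define lam where "lam = (1 - t) / (1 - t')"
    have lam: "0 \<le> lam" "lam \<le> 1" using t1 tt' t'0 by (auto simp: lam_def field_simps)
    have comb: "lam * phi h1 s + (1 - lam) * phi h2 s = s" if "frac s \<in> Fr ord x" for s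
    proof (cases "frac s \<le> t'")
      case True then show ?thesis by (simp add: phi_def h1_def h2_def frac_def algebra_simps)
    next
      case False
      then have "frac s = t" using Fcase[OF that] by auto
      moreover have "lam * t' + (1 - lam) = t"
      proof -
        have "lam * (1 - t') = 1 - t" using t1 tt' unfolding lam_def by simp
        then show ?thesis by (simp add: algebra_simps)
      qed
      ultimately have e: "lam * t' + (1 - lam) = frac s" by simp
      have "phi h1 s = of_int \<lfloor>s\<rfloor> + t'" "phi h2 s = of_int \<lfloor>s\<rfloor> + 1"
        using False by (auto simp: phi_def h1_def h2_def)
      moreover have "s = of_int \<lfloor>s\<rfloor> + frac s" by (simp add: frac_def)
      ultimately show ?thesis using e by (simp add: algebra_simps)
    qed
    let ?y1 = "rnd ord h1 x" and ?y2 = "rnd ord h2 x"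
    have xeq: "x = lam *\<^sub>R ?y1 + (1 - lam) *\<^sub>R ?y2"
    proof (subst vec_eq_iff, intro allI)
      fix j
      have f1: "frac (pre ord x (Suc (ord j))) \<in> Fr ord x" using ordlt[of j]
        by (auto simp: Fr_def)
      have f2: "frac (pre ord x (ord j)) \<in> Fr ord x" using ordlt[of j]
        by (auto simp: Fr_def)
      show "x $ j = (lam *\<^sub>R ?y1 + (1 - lam) *\<^sub>R ?y2) $ j"
        using comp_pre[OF inj, of x j] comb[OF f1] comb[OF f2]
        by (simp add: rnd_def algebra_simps)
    qed
    have Frsub: "Fr ord (rnd ord h x) - {0} \<subseteq> (Fr ord x - {0}) - {t}"
      if ah: "adm h" and hD: "\<And>u. u \<in> Fr ord x \<Longrightarrow> h u = 1 \<or> h u \<in> D" for h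
    proof
      fix v assume v: "v \<in> Fr ord (rnd ord h x) - {0}"
      then obtain p where p: "p \<le> ?n" "v = frac (pre ord (rnd ord h x) p)" by (auto simp: Fr_def)
      have u: "frac (pre ord x p) \<in> Fr ord x" using p by (auto simp: Fr_def)
      have "v = (if h (frac (pre ord x p)) = 1 then 0 else h (frac (pre ord x p)))"
        using p pre_rnd[OF bij ah] frac_phi[OF ah] by simp
      then have "v \<in> D" using v hD[OF u] by (auto split: if_splits)
      then show "v \<in> (Fr ord x - {0}) - {t}" using v by (auto simp: D_def)
    qed
    have hD1: "h1 u = 1 \<or> h1 u \<in> D" if "u \<in> Fr ord x" for u
      using Fcase[OF that] t'in tt' that by (auto simp: h1_def D_def)
    have hD2: "h2 u = 1 \<or> h2 u \<in> D" if "u \<in> Fr ord x" for u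
      using Fcase[OF that] tt' that by (auto simp: h2_def D_def)
    have fin2: "finite (Fr ord x - {0})" using finF by simp
    have lt: "card ((Fr ord x - {0}) - {t}) < N"
      using less.prems(2) card_Diff1_less[OF fin2 tin] by simp
    have c1: "card (Fr ord ?y1 - {0}) < N"
      using card_mono[OF finite_Diff[OF fin2] Frsub[OF a1 hD1]] lt by linarith
    have c2: "card (Fr ord ?y2 - {0}) < N"
      using card_mono[OF finite_Diff[OF fin2] Frsub[OF a2 hD2]] lt by linarith
    have y1: "?y1 \<in> convex hull ?K"
      using less.IH[OF c1 rnd_Qbeta[OF bij LK bint less.prems(1) a1] refl] .
    have y2: "?y2 \<in> convex hull ?K"
      using less.IH[OF c2 rnd_Qbeta[OF bij LK bint less.prems(1) a2] refl] .
    show ?thesis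
      using convexD[OF convex_convex_hull y1 y2, of lam "1 - lam"] lam xeq by simp
  qed
qed


theorem corollary3p2:
  fixes A :: "real^'n^'m" and b :: "real^'m" and ord :: "'n \<Rightarrow> nat"
  assumes "bij_betw ord UNIV {0..<CARD('n)}"
    and "circular ord A"
    and "\<forall>i. b $ i \<in> \<int> \<and> b $ i \<ge> 0"
  shows "Qint_hull A b = convex hull (\<Union>\<beta>::nat. Qbeta (real \<beta>) A b)"
proof -
  let ?n = "CARD('n)"
  let ?P = "\<lambda>i lk. fst lk < ?n \<and> snd lk \<le> ?n \<and>
        (\<forall>j. A $ i $ j = (if ord j \<in> cyc_interval ?n (fst lk) (snd lk) then 1 else 0))"
  have "\<forall>i. \<exists>lk. ?P i lk"
  proof
    fix i
    obtain l k where "l < ?n" "k \<le> ?n - 1"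
      "\<forall>j. A $ i $ j = (if ord j \<in> cyc_interval ?n l k then 1 else 0)"
      using assms(2) unfolding circular_def by blast
    then show "\<exists>lk. ?P i lk" by (intro exI[of _ "(l, k)"]) auto
  qed
  then obtain f where f: "\<forall>i. ?P i (f i)" by metis
  define L where "L = (\<lambda>i. fst (f i))"
  define K where "K = (\<lambda>i. snd (f i))"
  have LK: "\<forall>i. L i < ?n \<and> K i \<le> ?n \<and>
        (\<forall>j. A $ i $ j = (if ord j \<in> cyc_interval ?n (L i) (K i) then 1 else 0))"
    using f by (simp add: L_def K_def)
  have bint: "\<forall>i. b $ i \<in> \<int>" using assms(3) by blast
  show ?thesis
  proof
    show "Qint_hull A b \<subseteq> convex hull (\<Union>\<beta>::nat. Qbeta (real \<beta>) A b)"
      unfolding Qint_hull_def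
    proof (rule hull_mono, rule subsetI)
      fix x assume x: "x \<in> Qpoly A b \<inter> {x. \<forall>j. x $ j \<in> \<int>}"
      have "(\<Sum>j\<in>UNIV. x $ j) \<in> \<int>" using x by (auto intro: Ints_sum)
      then obtain z where z: "(\<Sum>j\<in>UNIV. x $ j) = of_int z" by (meson Ints_cases)
      have "0 \<le> (\<Sum>j\<in>UNIV. x $ j)" using x by (auto simp: Qpoly_def intro: sum_nonneg)
      then have "(\<Sum>j\<in>UNIV. x $ j) = real (nat z)" using z by simp
      then have "x \<in> Qbeta (real (nat z)) A b" using x by (simp add: Qbeta_def Qpoly_def)
      then show "x \<in> (\<Union>\<beta>::nat. Qbeta (real \<beta>) A b)" by blast
    qed
  next
    show "convex hull (\<Union>\<beta>::nat. Qbeta (real \<beta>) A b) \<subseteq> Qint_hull A b"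
      unfolding Qint_hull_def
    proof (rule hull_minimal)
      show "convex (convex hull (Qpoly A b \<inter> {x. \<forall>j. x $ j \<in> \<int>}))" by simp
      show "(\<Union>\<beta>::nat. Qbeta (real \<beta>) A b) \<subseteq> convex hull (Qpoly A b \<inter> {x. \<forall>j. x $ j \<in> \<int>})"
        using main_ind[OF assms(1) LK bint] by blast
    qed
  qed
qed

end
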